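(* Let $B\ge 1$, $S\ge 1$, $r,\lambda_{BB},\lambda_{SS},\lambda_{BS}>0$, and let $V(k_b,k_s)$, for $k_b\in\{0,\dots,B\}$ and $k_s\in\{1,\dots,S\}$, be defined by the recursion in the context. Then for all $k_b\in\{0,\dots,B-1\}$ and $k_s\in\{1,\dots,S\}$, $$V(k_b,k_s)-V(k_b+1,k_s)\le V(0,1)-V(1,1).$$
   Context: For $k_b\in\{0,\dots,B\}$ and $k_s\in\{1,\dots,S\}$, set $V(B,k_s)=0$, and for $k_b\le B-1$ define recursively $$V(k_b,k_s)=\frac{\lambda_{BB}k_b(B-k_b)V(k_b+1,k_s)+\lambda_{SS}(k_s-1)(S-k_s)V(k_b,k_s+1)+\lambda_{BS}k_b(S-k_s)V(k_b,k_s+1)+\lambda_{BS}k_s(B-k_b)V(k_b+1,k_s)+\lambda_{BS}(B-k_b)}{r+\lambda_{BB}k_b(B-k_b)+\lambda_{SS}(k_s-1)(S-k_s)+\lambda_{BS}k_b(S-k_s)+\lambda_{BS}k_s(B-k_b)}$$ (terms with coefficient $S-k_s=0$ are absent when $k_s=S$). Interpretation: in a market with $B$ buyers and $S$ sellers where each buyer–seller pair meets at Poisson rate $\lambda_{BS}$, each buyer pair at rate $\lambda_{BB}$, each seller pair at rate $\lambda_{SS}$ (independently), and information that a fixed seller $s$ is guilty spreads whenever an informed player meets an uninformed one (with $s$ herself counted among the $k_s$ informed sellers, and $s$'s own meetings with other sellers not spreading it), $V(k_b,k_s)$ is the expected discounted ($e^{-rt}$) number of meetings of $s$ with buyers who are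 not yet informed, starting from $k_b$ informed buyers and $k_s$ informed sellers. *)

theory Defs
  imports Complex_Main
begin

text \<open>Meaningful for kb in {0..B}, ks in {1..S}.
  Terms with coefficient (S - ks) are omitted when ks = S (ks >= S), which the
  guard below implements; for ks < S the factor S - ks is the real difference.\<close>

function V :: "nat \<Rightarrow> nat \<Rightarrow> real \<Rightarrow> real \<Rightarrow> real \<Rightarrow> real \<Rightarrow> nat \<Rightarrow> nat \<Rightarrow> real" where
  "V B S r lBB lSS lBS kb ks =
    (if B \<le> kb then 0
     else
       (let up_b = V B S r lBB lSS lBS (kb + 1) ks;
            up_s = (if ks < S then V B S r lBB lSS lBS kb (ks + 1) else 0);
            kbr = real kb; ksr = real ks; Br = real B; Sr = real S
        in (lBB * kbr * (Br - kbr) * up_b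
            + lSS * (ksr - 1) * (Sr - ksr) * up_s
            + lBS * kbr * (Sr - ksr) * up_s
            + lBS * ksr * (Br - kbr) * up_b
            + lBS * (Br - kbr))
           / (r + lBB * kbr * (Br - kbr) + lSS * (ksr - 1) * (Sr - ksr)
              + lBS * kbr * (Sr - ksr) + lBS * ksr * (Br - kbr))))"
  by pat_completeness auto
termination
  by (relation "measure (\<lambda>(B, S, r, lBB, lSS, lBS, kb, ks). (B - kb) + (S - ks))") auto

end

theory Submission
  imports Defs
begin

definition bt :: "real\<Rightarrow>real\<Rightarrow>real\<Rightarrow>real\<Rightarrow>real\<Rightarrow>real" where
 "bt a c B k j = a*k*(B-k) + c*j*(B-k)"
definition sg :: "real\<Rightarrow>real\<Rightarrow>real\<Rightarrow>real\<Rightarrow>real\<Rightarrow>real" where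
 "sg b c S k j = b*(j-1)*(S-j) + c*k*(S-j)"

lemma bt_nonneg: "0 \<le> a \<Longrightarrow> 0 \<le> c \<Longrightarrow> 0 \<le> k \<Longrightarrow> k \<le> B \<Longrightarrow> 0 \<le> j \<Longrightarrow> 0 \<le> bt a c B k j"
  unfolding bt_def by (intro add_nonneg_nonneg mult_nonneg_nonneg) auto

lemma sg_nonneg: "0 \<le> b \<Longrightarrow> 0 \<le> c \<Longrightarrow> 0 \<le> k \<Longrightarrow> 1 \<le> j \<Longrightarrow> j \<le> S \<Longrightarrow> 0 \<le> sg b c S k j"
  unfolding sg_def by (intro add_nonneg_nonneg mult_nonneg_nonneg) auto

lemma bt2: assumes "0 \<le> a" "0 \<le> c" "0 \<le> k" "k+2 \<le> B" "0 \<le> j"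
  shows "0 \<le> 2*bt a c B (k+1) j - bt a c B k j"
proof -
  have "2*bt a c B (k+1) j - bt a c B k j = (B-k-2)*(a*k+c*j) + 2*a*(B-k-1)"
    unfolding bt_def by (simp add: algebra_simps)
  also have "\<dots> \<ge> 0" using assms by (intro add_nonneg_nonneg mult_nonneg_nonneg) auto
  finally show ?thesis .
qed

lemma sg2: assumes "0 \<le> b" "0 \<le> c" "0 \<le> k" "j+2 \<le> S" "1 \<le> j"
  shows "0 \<le> 2*sg b c S k (j+1) - sg b c S k j"
proof -
  have "2*sg b c S k (j+1) - sg b c S k j = (S-j-2)*(b*j+c*k) + (S-j)*b"
    unfolding sg_def by (simp add: algebra_simps)
  also have "\<dots> \<ge> 0" using assms by (intro add_nonneg_nonneg mult_nonneg_nonneg) auto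
  finally show ?thesis .
qed

lemma sg3: "2*sg b c S k (j+1) - sg b c S k j - sg b c S k (j+2) = 2*b"
  unfolding sg_def by (simp add: algebra_simps)

lemma idD:
  assumes e00: "(r + bt a c B k j + sg b c S k j)*v00 = bt a c B k j*v10 + sg b c S k j*v01 + c*(B-k)"
  and e10: "(r + bt a c B (k+1) j + sg b c S (k+1) j)*v10 = bt a c B (k+1) j*v20 + sg b c S (k+1) j*v11 + c*(B-(k+1))"
  shows "(r + bt a c B k j + sg b c S k j)*(v00-v10) =
     bt a c B (k+1) j*(v10-v20) + sg b c S k j*(v01-v11) + c*(S-j)*(v10-v11) + c"
  using assms unfolding bt_def sg_def by algebra

lemma idE:
  assumes e00: "(r + bt a c B k j + sg b c S k j)*v00 = bt a c B k j*v10 + sg b c S k j*v01 + c*(B-k)"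
  and e01: "(r + bt a c B k (j+1) + sg b c S k (j+1))*v01 = bt a c B k (j+1)*v11 + sg b c S k (j+1)*v02 + c*(B-k)"
  shows "(r + bt a c B k j + sg b c S k j)*(v00-v01) =
     bt a c B k j*(v10-v11) + sg b c S k (j+1)*(v01-v02) + c*(B-k)*(v01-v11)"
  using assms unfolding bt_def sg_def by algebra

lemma idF:
  assumes e00: "(r + bt a c B k j + sg b c S k j)*v00 = bt a c B k j*v10 + sg b c S k j*v01 + c*(B-k)"
  and e10: "(r + bt a c B (k+1) j + sg b c S (k+1) j)*v10 = bt a c B (k+1) j*v20 + sg b c S (k+1) j*v11 + c*(B-(k+1))"
  and e20: "(r + bt a c B (k+2) j + sg b c S (k+2) j)*v20 = bt a c B (k+2) j*v30 + sg b c S (k+2) j*v21 + c*(B-(k+2))"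
  shows "(r + bt a c B k j + sg b c S k j)*((v00-v10)-(v10-v20)) =
     (2*bt a c B (k+1) j - bt a c B k j)*((v10-v20)-(v20-v30)) + sg b c S k j*((v01-v11)-(v11-v21))
     + 2*a*(v20-v30) + 2*c*(S-j)*((v10-v20)-(v11-v21))"
  using assms unfolding bt_def sg_def by algebra

lemma idG:
  assumes e00: "(r + bt a c B k j + sg b c S k j)*v00 = bt a c B k j*v10 + sg b c S k j*v01 + c*(B-k)"
  and e10: "(r + bt a c B (k+1) j + sg b c S (k+1) j)*v10 = bt a c B (k+1) j*v20 + sg b c S (k+1) j*v11 + c*(B-(k+1))"
  and e01: "(r + bt a c B k (j+1) + sg b c S k (j+1))*v01 = bt a c B k (j+1)*v11 + sg b c S k (j+1)*v02 + c*(B-k)"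
  and e11: "(r + bt a c B (k+1) (j+1) + sg b c S (k+1) (j+1))*v11 = bt a c B (k+1) (j+1)*v21 + sg b c S (k+1) (j+1)*v12 + c*(B-(k+1))"
  shows "(r + bt a c B k j + sg b c S k j)*((v00-v10)-(v01-v11)) =
     bt a c B (k+1) j*((v10-v20)-(v11-v21)) + sg b c S k (j+1)*((v01-v11)-(v02-v12)) + c*(v11-v21)
     + c*(S-j)*(v10-v11) - c*(S-j-1)*(v11-v12) + c*(B-k)*((v01-v11)-(v11-v21))"
  using assms unfolding bt_def sg_def by algebra

lemma idH:
  assumes e00: "(r + bt a c B k j + sg b c S k j)*v00 = bt a c B k j*v10 + sg b c S k j*v01 + c*(B-k)"
  and e01: "(r + bt a c B k (j+1) + sg b c S k (j+1))*v01 = bt a c B k (j+1)*v11 + sg b c S k (j+1)*v02 + c*(B-k)"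
  and e02: "(r + bt a c B k (j+2) + sg b c S k (j+2))*v02 = bt a c B k (j+2)*v12 + sg b c S k (j+2)*v03 + c*(B-k)"
  shows "(r + bt a c B k j + sg b c S k j)*((v00-v01)-(v01-v02)) =
     bt a c B k j*((v10-v11)-(v11-v12)) + 2*c*(B-k)*((v01-v11)-(v02-v12))
     + (2*sg b c S k (j+1) - sg b c S k j)*(v01-v02) - sg b c S k (j+2)*(v02-v03)"
  using assms unfolding bt_def sg_def by algebra

lemma V_zero: "B \<le> k \<Longrightarrow> V B S r a b c k j = 0"
  by (subst V.simps) simp

lemma V_eq:
  assumes "0<r" "0<a" "0<b" "0<c" "1 \<le> j" "j \<le> S" "k \<le> B" "kr = real k" "jr = real j"
  shows "(r + bt a c (real B) kr jr + sg b c (real S) kr jr) * V B S r a b c k j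
      = bt a c (real B) kr jr * V B S r a b c (Suc k) j + sg b c (real S) kr jr * V B S r a b c k (Suc j)
        + c*(real B - kr)"
proof (cases "k = B")
  case True then show ?thesis using assms by (simp add: V_zero bt_def sg_def)
next
  case False
  hence kB: "k < B" using assms by simp
  have bt0: "bt a c B kr jr \<ge> 0" using assms by (intro bt_nonneg) auto
  have sg0: "sg b c S kr jr \<ge> 0" using assms by (intro sg_nonneg) auto
  have den: "r + bt a c B kr jr + sg b c S kr jr > 0" using bt0 sg0 assms by linarith
  define us where "us = (if j < S then V B S r a b c k (j+1) else 0)"
  have V: "V B S r a b c k j = (a*real k*(real B-real k)*V B S r a b c (k+1) j
      + b*(real j-1)*(real S-real j)*us + c*real k*(real S-real j)*us
      + c*real j*(real B-real k)*V B S r a b c (k+1) j + c*(real B-real k))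
     / (r + a*real k*(real B-real k) + b*(real j-1)*(real S-real j) + c*real k*(real S-real j)
      + c*real j*(real B-real k))"
    unfolding V.simps[of B S r a b c k j] us_def using kB by (simp add: Let_def)
  have us: "sg b c S kr jr * us = sg b c S kr jr * V B S r a b c k (Suc j)"
    using assms unfolding us_def sg_def by auto
  have "V B S r a b c k j = (bt a c B kr jr * V B S r a b c (Suc k) j + sg b c S kr jr * us
        + c*(real B - kr)) / (r + bt a c (real B) kr jr + sg b c (real S) kr jr)"
    unfolding V using assms by (simp add: bt_def sg_def algebra_simps)
  then show ?thesis using den us by (simp add: field_simps)
qed

lemma nn: "0 < (R::real) \<Longrightarrow> R*X = Y \<Longrightarrow> 0 \<le> Y \<Longrightarrow> 0 \<le> X"
  by (metis zero_le_mult_iff not_le)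

definition PP :: "(nat \<Rightarrow> nat \<Rightarrow> real) \<Rightarrow> nat \<Rightarrow> nat \<Rightarrow> nat \<Rightarrow> bool" where
  "PP v S k j \<longleftrightarrow>
    0 \<le> v k j - v (Suc k) j \<and>
    (j < S \<longrightarrow> 0 \<le> v k j - v k (Suc j)) \<and>
    0 \<le> (v k j - v (Suc k) j) - (v (Suc k) j - v (Suc (Suc k)) j) \<and>
    (j < S \<longrightarrow> 0 \<le> (v k j - v (Suc k) j) - (v k (Suc j) - v (Suc k) (Suc j))) \<and>
    (Suc j < S \<longrightarrow> 0 \<le> (v k j - v k (Suc j)) - (v k (Suc j) - v k (Suc (Suc j))))"

lemma main:
  fixes v :: "nat \<Rightarrow> nat \<Rightarrow> real" and B S :: nat
  assumes pos: "0<r" "0<a" "0<b" "0<c"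
  and vz: "\<And>k j. B \<le> k \<Longrightarrow> v k j = 0"
  and veq: "\<And>k j kr jr. k \<le> B \<Longrightarrow> 1 \<le> j \<Longrightarrow> j \<le> S \<Longrightarrow> kr = real k \<Longrightarrow> jr = real j \<Longrightarrow>
      (r + bt a c (real B) kr jr + sg b c (real S) kr jr) * v k j
      = bt a c (real B) kr jr * v (Suc k) j + sg b c (real S) kr jr * v k (Suc j) + c*(real B - kr)"
  shows "k \<le> B \<Longrightarrow> 1 \<le> j \<Longrightarrow> j \<le> S \<Longrightarrow> PP v S k j"
proof (induction "(B-k)+(S-j)" arbitrary: k j rule: less_induct)
  case less
  show ?case
  proof (cases "k = B")
    case True
    then show ?thesis unfolding PP_def using vz by simp
  next
    case False
    hence kB: "k < B" using less by simp
    have j1: "1 \<le> j" "j \<le> S" using less by auto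
    have IH: "\<And>k' j'. k' \<le> B \<Longrightarrow> 1 \<le> j' \<Longrightarrow> j' \<le> S \<Longrightarrow> (B-k')+(S-j') < (B-k)+(S-j) \<Longrightarrow> PP v S k' j'"
      using less by blast
    have P10: "PP v S (Suc k) j" using IH kB j1 by simp
    have P01: "j < S \<Longrightarrow> PP v S k (Suc j)" using IH kB j1 by simp
    have P11: "j < S \<Longrightarrow> PP v S (Suc k) (Suc j)" using IH kB j1 by simp
    have P20: "Suc k < B \<Longrightarrow> PP v S (Suc (Suc k)) j" using IH kB j1 by simp
    have P02: "Suc (Suc j) < S \<Longrightarrow> PP v S k (Suc (Suc j))" using IH kB j1 by simp
    let ?R = "r + bt a c (real B) (real k) (real j) + sg b c (real S) (real k) (real j)"
    have bt00: "0 \<le> bt a c (real B) (real k) (real j)" using pos kB by (intro bt_nonneg) auto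
    have bt10: "0 \<le> bt a c (real B) (real k + 1) (real j)" using pos kB by (intro bt_nonneg) auto
    have sg00: "0 \<le> sg b c (real S) (real k) (real j)" using pos j1 by (intro sg_nonneg) auto
    have R: "0 < ?R" using bt00 sg00 pos by linarith
    have sgS: "j = S \<Longrightarrow> sg b c (real S) x (real j) = 0" for x unfolding sg_def by simp
    have sgS': "y = real S \<Longrightarrow> sg b c (real S) x y = 0" for x y unfolding sg_def by simp
    have e00: "?R * v k j = bt a c (real B) (real k) (real j) * v (Suc k) j
        + sg b c (real S) (real k) (real j) * v k (Suc j) + c*(real B - real k)"
      using veq[of k j "real k" "real j"] kB j1 by simp
    have e10: "(r + bt a c (real B) (real k + 1) (real j) + sg b c (real S) (real k + 1) (real j)) * v (Suc k) j
        = bt a c (real B) (real k + 1) (real j) * v (Suc (Suc k)) j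
        + sg b c (real S) (real k + 1) (real j) * v (Suc k) (Suc j) + c*(real B - (real k + 1))"
      using veq[of "Suc k" j "real k + 1" "real j"] kB j1 by simp
    have D: "0 \<le> v k j - v (Suc k) j"
    proof (rule nn[OF R idD[OF e00 e10]])
      have t1: "0 \<le> bt a c (real B) (real k + 1) (real j) * (v (Suc k) j - v (Suc (Suc k)) j)"
        using bt10 P10 unfolding PP_def by simp
      have t2: "0 \<le> sg b c (real S) (real k) (real j) * (v k (Suc j) - v (Suc k) (Suc j))"
      proof (cases "j < S")
        case True then show ?thesis using sg00 P01 unfolding PP_def by simp
      next
        case False then show ?thesis using sgS j1 by simp
      qed
      have t3: "0 \<le> c * (real S - real j) * (v (Suc k) j - v (Suc k) (Suc j))"
      proof (cases "j < S")
        case True then show ?thesis using pos P10 unfolding PP_def by simp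
      next
        case False then show ?thesis using j1 by simp
      qed
      show "0 \<le> bt a c (real B) (real k + 1) (real j) * (v (Suc k) j - v (Suc (Suc k)) j) +
        sg b c (real S) (real k) (real j) * (v k (Suc j) - v (Suc k) (Suc j)) +
        c * (real S - real j) * (v (Suc k) j - v (Suc k) (Suc j)) + c"
        using t1 t2 t3 pos by linarith
    qed
    have E: "j < S \<Longrightarrow> 0 \<le> v k j - v k (Suc j)"
    proof -
      assume jS: "j < S"
      have e01: "(r + bt a c (real B) (real k) (real j + 1) + sg b c (real S) (real k) (real j + 1)) * v k (Suc j)
        = bt a c (real B) (real k) (real j + 1) * v (Suc k) (Suc j)
        + sg b c (real S) (real k) (real j + 1) * v k (Suc (Suc j)) + c*(real B - real k)"
        using veq[of k "Suc j" "real k" "real j + 1"] kB j1 jS by simp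
      show ?thesis
      proof (rule nn[OF R idE[OF e00 e01]])
        have t1: "0 \<le> bt a c (real B) (real k) (real j) * (v (Suc k) j - v (Suc k) (Suc j))"
          using bt00 P10 jS unfolding PP_def by simp
        have t2: "0 \<le> sg b c (real S) (real k) (real j + 1) * (v k (Suc j) - v k (Suc (Suc j)))"
        proof (cases "Suc j < S")
          case True
          have "0 \<le> sg b c (real S) (real k) (real j + 1)" using pos j1 jS by (intro sg_nonneg) auto
          then show ?thesis using P01[OF jS] True unfolding PP_def by simp
        next
          case False
          then have "S = Suc j" using jS by simp
          then show ?thesis using sgS'[of "real j + 1"] by simp
        qed
        have t3: "0 \<le> c * (real B - real k) * (v k (Suc j) - v (Suc k) (Suc j))"
          using pos kB P01[OF jS] unfolding PP_def by simp
        show "0 \<le> bt a c (real B) (real k) (real j) * (v (Suc k) j - v (Suc k) (Suc j)) +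
          sg b c (real S) (real k) (real j + 1) * (v k (Suc j) - v k (Suc (Suc j))) +
          c * (real B - real k) * (v k (Suc j) - v (Suc k) (Suc j))"
          using t1 t2 t3 by linarith
      qed
    qed
    have F: "0 \<le> (v k j - v (Suc k) j) - (v (Suc k) j - v (Suc (Suc k)) j)"
    proof (cases "Suc k < B")
      case False
      then have "v (Suc k) j = 0" "v (Suc (Suc k)) j = 0" using vz kB by auto
      then show ?thesis using D by simp
    next
      case True
      have e20: "(r + bt a c (real B) (real k + 2) (real j) + sg b c (real S) (real k + 2) (real j)) * v (Suc (Suc k)) j
        = bt a c (real B) (real k + 2) (real j) * v (Suc (Suc (Suc k))) j
        + sg b c (real S) (real k + 2) (real j) * v (Suc (Suc k)) (Suc j) + c*(real B - (real k + 2))"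
        using veq[of "Suc (Suc k)" j "real k + 2" "real j"] True j1 by simp
      show ?thesis
      proof (rule nn[OF R idF[OF e00 e10 e20]])
        have "0 \<le> 2*bt a c (real B) (real k + 1) (real j) - bt a c (real B) (real k) (real j)"
          using pos True by (intro bt2) auto
        then have t1: "0 \<le> (2*bt a c (real B) (real k + 1) (real j) - bt a c (real B) (real k) (real j))
           * ((v (Suc k) j - v (Suc (Suc k)) j) - (v (Suc (Suc k)) j - v (Suc (Suc (Suc k))) j))"
          using P10 unfolding PP_def by simp
        have t2: "0 \<le> sg b c (real S) (real k) (real j) * ((v k (Suc j) - v (Suc k) (Suc j)) - (v (Suc k) (Suc j) - v (Suc (Suc k)) (Suc j)))"
        proof (cases "j < S")
          case True then show ?thesis using sg00 P01 unfolding PP_def by simp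
        next
          case False then show ?thesis using sgS j1 by simp
        qed
        have t3: "0 \<le> 2*a*(v (Suc (Suc k)) j - v (Suc (Suc (Suc k))) j)"
          using pos P20[OF True] unfolding PP_def by simp
        have t4: "0 \<le> 2*c*(real S - real j)*((v (Suc k) j - v (Suc (Suc k)) j) - (v (Suc k) (Suc j) - v (Suc (Suc k)) (Suc j)))"
        proof (cases "j < S")
          case True then show ?thesis using pos P10 unfolding PP_def by simp
        next
          case False then show ?thesis using j1 by simp
        qed
        show "0 \<le> (2*bt a c (real B) (real k + 1) (real j) - bt a c (real B) (real k) (real j))
           * ((v (Suc k) j - v (Suc (Suc k)) j) - (v (Suc (Suc k)) j - v (Suc (Suc (Suc k))) j))
          + sg b c (real S) (real k) (real j) * ((v k (Suc j) - v (Suc k) (Suc j)) - (v (Suc k) (Suc j) - v (Suc (Suc k)) (Suc j)))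
          + 2*a*(v (Suc (Suc k)) j - v (Suc (Suc (Suc k))) j)
          + 2*c*(real S - real j)*((v (Suc k) j - v (Suc (Suc k)) j) - (v (Suc k) (Suc j) - v (Suc (Suc k)) (Suc j)))"
          using t1 t2 t3 t4 by linarith
      qed
    qed
    have G: "j < S \<Longrightarrow> 0 \<le> (v k j - v (Suc k) j) - (v k (Suc j) - v (Suc k) (Suc j))"
    proof -
      assume jS: "j < S"
      have e01: "(r + bt a c (real B) (real k) (real j + 1) + sg b c (real S) (real k) (real j + 1)) * v k (Suc j)
        = bt a c (real B) (real k) (real j + 1) * v (Suc k) (Suc j)
        + sg b c (real S) (real k) (real j + 1) * v k (Suc (Suc j)) + c*(real B - real k)"
        using veq[of k "Suc j" "real k" "real j + 1"] kB j1 jS by simp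
      have e11: "(r + bt a c (real B) (real k + 1) (real j + 1) + sg b c (real S) (real k + 1) (real j + 1)) * v (Suc k) (Suc j)
        = bt a c (real B) (real k + 1) (real j + 1) * v (Suc (Suc k)) (Suc j)
        + sg b c (real S) (real k + 1) (real j + 1) * v (Suc k) (Suc (Suc j)) + c*(real B - (real k + 1))"
        using veq[of "Suc k" "Suc j" "real k + 1" "real j + 1"] kB j1 jS by simp
      show ?thesis
      proof (rule nn[OF R idG[OF e00 e10 e01 e11]])
        have t1: "0 \<le> bt a c (real B) (real k + 1) (real j) * ((v (Suc k) j - v (Suc (Suc k)) j) - (v (Suc k) (Suc j) - v (Suc (Suc k)) (Suc j)))"
          using bt10 P10 jS unfolding PP_def by simp
        have t2: "0 \<le> sg b c (real S) (real k) (real j + 1) * ((v k (Suc j) - v (Suc k) (Suc j)) - (v k (Suc (Suc j)) - v (Suc k) (Suc (Suc j))))"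
        proof (cases "Suc j < S")
          case True
          have "0 \<le> sg b c (real S) (real k) (real j + 1)" using pos j1 jS by (intro sg_nonneg) auto
          then show ?thesis using P01[OF jS] True unfolding PP_def by simp
        next
          case False
          then have "S = Suc j" using jS by simp
          then show ?thesis using sgS'[of "real j + 1"] by simp
        qed
        have t3: "0 \<le> c*(v (Suc k) (Suc j) - v (Suc (Suc k)) (Suc j))"
          using pos P11[OF jS] unfolding PP_def by simp
        have t4: "0 \<le> c*(real S - real j)*(v (Suc k) j - v (Suc k) (Suc j)) - c*(real S - real j - 1)*(v (Suc k) (Suc j) - v (Suc k) (Suc (Suc j)))"
        proof (cases "Suc j < S")
          case True
          have h: "0 \<le> (v (Suc k) j - v (Suc k) (Suc j)) - (v (Suc k) (Suc j) - v (Suc k) (Suc (Suc j)))"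
            "0 \<le> v (Suc k) j - v (Suc k) (Suc j)"
            using P10 True jS unfolding PP_def by auto
          have "c*(real S - real j)*(v (Suc k) j - v (Suc k) (Suc j)) - c*(real S - real j - 1)*(v (Suc k) (Suc j) - v (Suc k) (Suc (Suc j)))
             = c*(v (Suc k) j - v (Suc k) (Suc j)) + (c*(real S - real j - 1))*((v (Suc k) j - v (Suc k) (Suc j)) - (v (Suc k) (Suc j) - v (Suc k) (Suc (Suc j))))"
            by (simp add: algebra_simps)
          moreover have "0 \<le> c*(real S - real j - 1)" using pos True by simp
          ultimately show ?thesis using h pos by simp
        next
          case False
          then have "S = Suc j" using jS by simp
          then show ?thesis using pos P10 jS unfolding PP_def by simp
        qed
        have t5: "0 \<le> c*(real B - real k)*((v k (Suc j) - v (Suc k) (Suc j)) - (v (Suc k) (Suc j) - v (Suc (Suc k)) (Suc j)))"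
          using pos kB P01[OF jS] unfolding PP_def by simp
        show "0 \<le> bt a c (real B) (real k + 1) (real j) * ((v (Suc k) j - v (Suc (Suc k)) j) - (v (Suc k) (Suc j) - v (Suc (Suc k)) (Suc j)))
          + sg b c (real S) (real k) (real j + 1) * ((v k (Suc j) - v (Suc k) (Suc j)) - (v k (Suc (Suc j)) - v (Suc k) (Suc (Suc j))))
          + c*(v (Suc k) (Suc j) - v (Suc (Suc k)) (Suc j))
          + c*(real S - real j)*(v (Suc k) j - v (Suc k) (Suc j)) - c*(real S - real j - 1)*(v (Suc k) (Suc j) - v (Suc k) (Suc (Suc j)))
          + c*(real B - real k)*((v k (Suc j) - v (Suc k) (Suc j)) - (v (Suc k) (Suc j) - v (Suc (Suc k)) (Suc j)))"
          using t1 t2 t3 t4 t5 by linarith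
      qed
    qed
    have H: "Suc j < S \<Longrightarrow> 0 \<le> (v k j - v k (Suc j)) - (v k (Suc j) - v k (Suc (Suc j)))"
    proof -
      assume jS: "Suc j < S"
      have e01: "(r + bt a c (real B) (real k) (real j + 1) + sg b c (real S) (real k) (real j + 1)) * v k (Suc j)
        = bt a c (real B) (real k) (real j + 1) * v (Suc k) (Suc j)
        + sg b c (real S) (real k) (real j + 1) * v k (Suc (Suc j)) + c*(real B - real k)"
        using veq[of k "Suc j" "real k" "real j + 1"] kB j1 jS by simp
      have e02: "(r + bt a c (real B) (real k) (real j + 2) + sg b c (real S) (real k) (real j + 2)) * v k (Suc (Suc j))
        = bt a c (real B) (real k) (real j + 2) * v (Suc k) (Suc (Suc j))
        + sg b c (real S) (real k) (real j + 2) * v k (Suc (Suc (Suc j))) + c*(real B - real k)"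
        using veq[of k "Suc (Suc j)" "real k" "real j + 2"] kB j1 jS by simp
      show ?thesis
      proof (rule nn[OF R idH[OF e00 e01 e02]])
        have t1: "0 \<le> bt a c (real B) (real k) (real j) * ((v (Suc k) j - v (Suc k) (Suc j)) - (v (Suc k) (Suc j) - v (Suc k) (Suc (Suc j))))"
          using bt00 P10 jS unfolding PP_def by simp
        have t2: "0 \<le> 2*c*(real B - real k)*((v k (Suc j) - v (Suc k) (Suc j)) - (v k (Suc (Suc j)) - v (Suc k) (Suc (Suc j))))"
          using pos kB P01 jS unfolding PP_def by simp
        have s2: "0 \<le> 2*sg b c (real S) (real k) (real j + 1) - sg b c (real S) (real k) (real j)"
          using pos j1 jS by (intro sg2) auto
        have t3: "0 \<le> (2*sg b c (real S) (real k) (real j + 1) - sg b c (real S) (real k) (real j))*(v k (Suc j) - v k (Suc (Suc j)))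
           - sg b c (real S) (real k) (real j + 2)*(v k (Suc (Suc j)) - v k (Suc (Suc (Suc j))))"
        proof (cases "Suc (Suc j) < S")
          case True
          have h: "0 \<le> (v k (Suc j) - v k (Suc (Suc j))) - (v k (Suc (Suc j)) - v k (Suc (Suc (Suc j))))"
            using P01 True jS unfolding PP_def by auto
          have h2: "0 \<le> v k (Suc (Suc j)) - v k (Suc (Suc (Suc j)))"
            using P02[OF True] True unfolding PP_def by auto
          have s3: "2*sg b c (real S) (real k) (real j + 1) - sg b c (real S) (real k) (real j) - sg b c (real S) (real k) (real j + 2) = 2*b"
            using sg3[of b c "real S" "real k" "real j"] by simp
          have "(2*sg b c (real S) (real k) (real j + 1) - sg b c (real S) (real k) (real j))*(v k (Suc j) - v k (Suc (Suc j)))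
           - sg b c (real S) (real k) (real j + 2)*(v k (Suc (Suc j)) - v k (Suc (Suc (Suc j))))
           = (2*sg b c (real S) (real k) (real j + 1) - sg b c (real S) (real k) (real j))*((v k (Suc j) - v k (Suc (Suc j))) - (v k (Suc (Suc j)) - v k (Suc (Suc (Suc j)))))
            + (2*sg b c (real S) (real k) (real j + 1) - sg b c (real S) (real k) (real j) - sg b c (real S) (real k) (real j + 2))*(v k (Suc (Suc j)) - v k (Suc (Suc (Suc j))))"
            by (simp add: algebra_simps)
          also have "\<dots> = (2*sg b c (real S) (real k) (real j + 1) - sg b c (real S) (real k) (real j))*((v k (Suc j) - v k (Suc (Suc j))) - (v k (Suc (Suc j)) - v k (Suc (Suc (Suc j)))))
            + (2*b)*(v k (Suc (Suc j)) - v k (Suc (Suc (Suc j))))" by (simp only: s3)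
          also have "\<dots> \<ge> 0" using s2 h h2 pos by (intro add_nonneg_nonneg mult_nonneg_nonneg) auto
          finally show ?thesis .
        next
          case False
          then have "S = Suc (Suc j)" using jS by simp
          then have z: "sg b c (real S) (real k) (real j + 2) = 0" using sgS'[of "real j + 2"] by simp
          have "0 \<le> v k (Suc j) - v k (Suc (Suc j))" using P01 jS unfolding PP_def by auto
          then show ?thesis using z s2 by simp
        qed
        show "0 \<le> bt a c (real B) (real k) (real j) * ((v (Suc k) j - v (Suc k) (Suc j)) - (v (Suc k) (Suc j) - v (Suc k) (Suc (Suc j))))
          + 2*c*(real B - real k)*((v k (Suc j) - v (Suc k) (Suc j)) - (v k (Suc (Suc j)) - v (Suc k) (Suc (Suc j))))
          + (2*sg b c (real S) (real k) (real j + 1) - sg b c (real S) (real k) (real j))*(v k (Suc j) - v k (Suc (Suc j)))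
          - sg b c (real S) (real k) (real j + 2)*(v k (Suc (Suc j)) - v k (Suc (Suc (Suc j))))"
          using t1 t2 t3 by linarith
      qed
    qed
    show ?thesis unfolding PP_def using D E F G H by blast
  qed
qed

theorem mainTheorem3:
  fixes B S :: nat and r lBB lSS lBS :: real and kb ks :: nat
  assumes "B \<ge> 1" and "S \<ge> 1"
    and "r > 0" and "lBB > 0" and "lSS > 0" and "lBS > 0"
    and "kb \<le> B - 1" and "1 \<le> ks" and "ks \<le> S"
  shows "V B S r lBB lSS lBS kb ks - V B S r lBB lSS lBS (kb + 1) ks
         \<le> V B S r lBB lSS lBS 0 1 - V B S r lBB lSS lBS 1 1"
proof -
  define v where "v = V B S r lBB lSS lBS"
  have P: "\<And>k j. k \<le> B \<Longrightarrow> 1 \<le> j \<Longrightarrow> j \<le> S \<Longrightarrow> PP v S k j"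
  proof -
    fix k j assume h: "k \<le> B" "1 \<le> j" "j \<le> S"
    show "PP v S k j"
    proof (rule main[of r lBB lSS lBS B v S])
      show "0 < r" "0 < lBB" "0 < lSS" "0 < lBS" using assms by auto
      show "\<And>k j. B \<le> k \<Longrightarrow> v k j = 0" unfolding v_def by (rule V_zero)
      show "\<And>k j kr jr. k \<le> B \<Longrightarrow> 1 \<le> j \<Longrightarrow> j \<le> S \<Longrightarrow> kr = real k \<Longrightarrow> jr = real j \<Longrightarrow>
         (r + bt lBB lBS (real B) kr jr + sg lSS lBS (real S) kr jr) * v k j =
         bt lBB lBS (real B) kr jr * v (Suc k) j + sg lSS lBS (real S) kr jr * v k (Suc j) + lBS * (real B - kr)"
        unfolding v_def using assms by (intro V_eq) auto
    qed (use h in auto)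
  qed
  have Dk: "n \<le> B \<Longrightarrow> v n ks - v (Suc n) ks \<le> v 0 ks - v 1 ks" for n
  proof (induction n)
    case 0 then show ?case by simp
  next
    case (Suc n)
    then have "PP v S n ks" using P assms by auto
    then show ?case using Suc unfolding PP_def by auto
  qed
  have Dj: "m \<le> S \<Longrightarrow> v 0 m - v 1 m \<le> v 0 1 - v 1 1 \<or> m = 0" for m
  proof (induction m)
    case 0 then show ?case by simp
  next
    case (Suc m)
    show ?case
    proof (cases "m = 0")
      case True then show ?thesis by simp
    next
      case False
      then have "PP v S 0 m" using P Suc by auto
      then show ?thesis using Suc False unfolding PP_def by auto
    qed
  qed
  have "v kb ks - v (Suc kb) ks \<le> v 0 ks - v 1 ks" using Dk assms by auto
  also have "\<dots> \<le> v 0 1 - v 1 1" using Dj[of ks] assms by auto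
  finally show ?thesis unfolding v_def by simp
qed

end
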